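(* For all integers $k\ge\ell\ge0$, $F_{k,\ell}$ equals the $(\widetilde I_0,I_0)$ entry of the matrix $\widetilde{\mathbf T}^{\ell}\,\mathbf U\,\mathbf T^{k-\ell}$, where $I_0=[0,a-1]$ and $\widetilde I_0=[0,a-2]$ (the empty set if $a=1$). In particular $F_{k,0}=F_k$.
   Context: Let $S$ be a finite set of integers with $a:=\max S\ge 1$ and $b:=-\min S\ge 1$. Each $s\in S$ carries a weight $\omega_s$ in a field $K$ of characteristic $0$; set $\omega_s:=0$ for $s\in\mathbb Z\setminus S$, and for $s\in\mathbb Z$ put $\beta_s:=\delta_{s,0}-\omega_s$ and $\widetilde\beta_s:=-\beta_{s+1}$. For $k\ge0$, $A_k$ is the $(k+1)\times(k+1)$ matrix with rows and columns indexed by $0,\dots,k$ whose $(i,j)$ entry is $\omega_{j-i}$. Put $F_0:=1$ and $F_k:=\det(1-A_{k-1})$ for $k\ge1$. For $0\le\ell\le k$, $F_{k,\ell}$ is the $(\ell,0)$ cofactor of $1-A_k$, i.e. $(-1)^\ell$ times the determinant of the matrix obtained from $1-A_k$ by deleting row $\ell$ and column $0$. Notation: $[m,n]:=\{i\in\mathbb Z: m\le i\le n\}$, $X+c:=\{x+c:x\in X\}$; an $n$-subset is a subset of cardinality $n$. For a finite set $I\subseteq\mathbb Z$ and $s\in\mathbb Z$, $\epsilon_s(I):=(-1)^{\#\{i\in I:\ i<s\}}$. $\mathbf T$ is the square matrix with rows and columns indexed by the $a$-subsets of $[-b,a-1]$ and entries $\mathbf T[I,J]:=\epsilon_s(I)\beta_s$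 if there is an integer $s$ with $I\cup\{a\}=(J+1)\cup\{s\}$ (such $s$ is then unique), and $0$ otherwise. $\widetilde{\mathbf T}$ is the square matrix indexed by the $(a-1)$-subsets of $[-b-1,a-2]$ with $\widetilde{\mathbf T}[I,J]:=\epsilon_s(I)\widetilde\beta_s$ if there is an integer $s$ with $I\cup\{a-1\}=(J+1)\cup\{s\}$, and $0$ otherwise. $\mathbf U$ is the matrix with rows indexed by the $(a-1)$-subsets of $[-b-1,a-2]$ and columns by the $a$-subsets of $[-b,a-1]$, with $\mathbf U[I,J]=1$ if $I\cup\{a-1\}=J$ and $0$ otherwise. *)

theory Defs
  imports "Jordan_Normal_Form.Determinant"
begin

definition wt :: "int set \<Rightarrow> (int \<Rightarrow> 'a::field_char_0) \<Rightarrow> int \<Rightarrow> 'a" where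
  "wt S w s = (if s \<in> S then w s else 0)"

definition beta :: "int set \<Rightarrow> (int \<Rightarrow> 'a::field_char_0) \<Rightarrow> int \<Rightarrow> 'a" where
  "beta S w s = (if s = 0 then 1 else 0) - wt S w s"

definition betat :: "int set \<Rightarrow> (int \<Rightarrow> 'a::field_char_0) \<Rightarrow> int \<Rightarrow> 'a" where
  "betat S w s = - beta S w (s + 1)"

definition Amat :: "int set \<Rightarrow> (int \<Rightarrow> 'a::field_char_0) \<Rightarrow> nat \<Rightarrow> 'a mat" where
  "Amat S w k = mat (k+1) (k+1) (\<lambda>(i,j). wt S w (int j - int i))"

definition Fk :: "int set \<Rightarrow> (int \<Rightarrow> 'a::field_char_0) \<Rightarrow> nat \<Rightarrow> 'a" where
  "Fk S w k = (if k = 0 then 1 else det (1\<^sub>m k - Amat S w (k - 1)))"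

definition Fkl :: "int set \<Rightarrow> (int \<Rightarrow> 'a::field_char_0) \<Rightarrow> nat \<Rightarrow> nat \<Rightarrow> 'a" where
  "Fkl S w k l = cofactor (1\<^sub>m (k+1) - Amat S w k) l 0"

definition shift :: "int set \<Rightarrow> int \<Rightarrow> int set" where
  "shift X c = (\<lambda>x. x + c) ` X"

definition eps :: "int \<Rightarrow> int set \<Rightarrow> 'a::field_char_0" where
  "eps s I = (-1) ^ card {i \<in> I. i < s}"

definition subsets_of :: "nat \<Rightarrow> int set \<Rightarrow> int set set" where
  "subsets_of n X = {I. I \<subseteq> X \<and> card I = n}"

definition transfer :: "int \<Rightarrow> (int \<Rightarrow> 'a::field_char_0) \<Rightarrow> int set \<Rightarrow> int set \<Rightarrow> 'a" where
  "transfer c bt I J =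
     (if \<exists>s. I \<union> {c} = shift J 1 \<union> {s}
      then (let s = (THE s. I \<union> {c} = shift J 1 \<union> {s}) in eps s I * bt s)
      else 0)"

definition Tmat :: "int set \<Rightarrow> (int \<Rightarrow> 'a::field_char_0) \<Rightarrow> int \<Rightarrow> int set \<Rightarrow> int set \<Rightarrow> 'a" where
  "Tmat S w a = transfer a (beta S w)"

definition Ttmat :: "int set \<Rightarrow> (int \<Rightarrow> 'a::field_char_0) \<Rightarrow> int \<Rightarrow> int set \<Rightarrow> int set \<Rightarrow> 'a" where
  "Ttmat S w a = transfer (a - 1) (betat S w)"

definition Umat :: "int \<Rightarrow> int set \<Rightarrow> int set \<Rightarrow> 'a::field_char_0" where
  "Umat a I J = (if I \<union> {a - 1} = J then 1 else 0)"

definition mmul :: "'i set \<Rightarrow> ('i \<Rightarrow> 'i \<Rightarrow> 'a::field_char_0) \<Rightarrow> ('i \<Rightarrow> 'i \<Rightarrow> 'a) \<Rightarrow> 'i \<Rightarrow> 'i \<Rightarrow> 'a" where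
  "mmul X f g I J = (\<Sum>K\<in>X. f I K * g K J)"

fun mpow :: "'i set \<Rightarrow> ('i \<Rightarrow> 'i \<Rightarrow> 'a::field_char_0) \<Rightarrow> nat \<Rightarrow> 'i \<Rightarrow> 'i \<Rightarrow> 'a" where
  "mpow X f 0 = (\<lambda>I J. if I = J then 1 else 0)"
| "mpow X f (Suc n) = mmul X (mpow X f n) f"

end

theory Submission imports Defs begin

fun lapF :: "(int \<Rightarrow> int \<Rightarrow> 'a::field_char_0) \<Rightarrow> int list \<Rightarrow> int set \<Rightarrow> int set \<Rightarrow> 'a" where
  "lapF B [] C F = (if C = F then 1 else 0)"
| "lapF B (r#rs) C F = (\<Sum>c\<in>C. eps c C * B r c * lapF B rs (C - {c}) F)"

lemma lapF_notsub: "\<not> F \<subseteq> C \<Longrightarrow> lapF B rs C F = 0"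
proof (induction rs arbitrary: C)
  case Nil thus ?case by auto
next
  case (Cons r rs)
  have "\<not> F \<subseteq> C - {c}" for c using Cons.prems by auto
  thus ?case using Cons.IH by simp
qed

lemma lapF_dead: "d \<in> C \<Longrightarrow> d \<notin> F \<Longrightarrow> \<forall>r\<in>set rs. B r d = 0 \<Longrightarrow> lapF B rs C F = 0"
proof (induction rs arbitrary: C)
  case Nil thus ?case by auto
next
  case (Cons r rs)
  show ?case unfolding lapF.simps
  proof (rule sum.neutral, intro ballI)
    fix c assume "c \<in> C"
    show "eps c C * B r c * lapF B rs (C - {c}) F = 0"
    proof (cases "c = d")
      case True thus ?thesis using Cons.prems by simp
    next
      case False thus ?thesis using Cons.prems Cons.IH[of "C - {c}"] by auto
    qed
  qed
qed

lemma eps_cong: "{i\<in>I. i < s} = {i\<in>J. i < s} \<Longrightarrow> eps s I = eps s J"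
  unfolding eps_def by simp

lemma lapF_strip:
  assumes "finite C" "F \<subseteq> C" "\<forall>x\<in>F. \<forall>y\<in>C-F. y < x"
  shows "lapF B rs C F = lapF B rs (C - F) {}"
  using assms
proof (induction rs arbitrary: C)
  case Nil thus ?case by auto
next
  case (Cons r rs)
  have "lapF B (r#rs) C F = (\<Sum>c\<in>C-F. eps c C * B r c * lapF B rs (C - {c}) F)"
    unfolding lapF.simps
    by (rule sum.mono_neutral_right, use Cons.prems in auto, auto intro!: lapF_notsub)
  also have "\<dots> = (\<Sum>c\<in>C-F. eps c (C-F) * B r c * lapF B rs (C - F - {c}) {})"
  proof (rule sum.cong[OF refl])
    fix c assume c: "c \<in> C - F"
    have "eps c C = (eps c (C-F) :: 'a)" apply (rule eps_cong) using Cons.prems(3) c by (auto; meson DiffI less_asym)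
    moreover have "lapF B rs (C - {c}) F = lapF B rs (C - F - {c}) {}"
      proof -
      have e: "C - {c} - F = C - F - {c}" by auto
      show ?thesis using Cons.IH[of "C - {c}"] Cons.prems c unfolding e by auto
    qed
    ultimately show "eps c C * B r c * lapF B rs (C - {c}) F = eps c (C-F) * B r c * lapF B rs (C - F - {c}) {}" by simp
  qed
  finally show ?case by simp
qed

lemma remove1_nth:
  assumes "distinct xs" "j < length xs" "j' < length xs - 1"
  shows "remove1 (xs!j) xs ! j' = xs ! (if j' < j then j' else Suc j')"
proof -
  have x: "xs = take j xs @ xs!j # drop (Suc j) xs" using assms(2) by (simp add: id_take_nth_drop)
  have nin: "xs!j \<notin> set (take j xs)"
    using assms(1,2) by (auto simp: in_set_conv_nth nth_eq_iff_index_eq)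
  have "remove1 (xs!j) xs = take j xs @ drop (Suc j) xs"
    by (subst x, simp add: remove1_append nin)
  thus ?thesis using assms by (auto simp: nth_append min_def)
qed

lemma card_less_nth:
  assumes "sorted_wrt (<) (xs::int list)" "j < length xs" and d: "distinct xs"
  shows "card {y \<in> set xs. y < xs!j} = j"
proof -
  have "{y \<in> set xs. y < xs!j} = (!) xs ` {..<j}"
  proof (intro equalityI subsetI)
    fix y assume "y \<in> {y \<in> set xs. y < xs!j}"
    then obtain i where i: "i < length xs" "y = xs!i" "xs!i < xs!j" by (auto simp: in_set_conv_nth)
    have "i < j"
    proof (rule ccontr)
      assume "\<not> i < j"
      hence "j \<le> i" by simp
      thus False using i assms sorted_wrt_nth_less[OF assms(1), of j i] by (cases "j = i") auto
    qed
    thus "y \<in> (!) xs ` {..<j}" using i by auto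
  next
    fix y assume "y \<in> (!) xs ` {..<j}"
    then obtain i where "i < j" "y = xs!i" by auto
    thus "y \<in> {y \<in> set xs. y < xs!j}" using assms sorted_wrt_nth_less[OF assms(1), of i j] by auto
  qed
  moreover have "inj_on ((!) xs) {..<j}" using d assms(2) by (auto simp: inj_on_def nth_eq_iff_index_eq)
  ultimately show ?thesis by (simp add: card_image)
qed

lemma lap_det:
  "finite C \<Longrightarrow> card C = length rs \<Longrightarrow>
   lapF B rs C {} = det (mat (length rs) (length rs) (\<lambda>(i,j). B (rs!i) (sorted_list_of_set C ! j)))"
proof (induction rs arbitrary: C)
  case Nil
  thus ?case by (simp add: det_dim_zero)
next
  case (Cons r rs)
  define xs where "xs = sorted_list_of_set C"
  define m where "m = length rs"
  have lx: "length xs = Suc m" using Cons.prems by (simp add: xs_def m_def)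
  have sx: "sorted_wrt (<) xs" and dx: "distinct xs" and setx: "set xs = C"
    using Cons.prems by (auto simp: xs_def)
  define M where "M = mat (Suc m) (Suc m) (\<lambda>(i,j). B ((r#rs)!i) (xs ! j))"
  have MC: "M \<in> carrier_mat (Suc m) (Suc m)" by (simp add: M_def)
  have del: "mat_delete M 0 j = mat m m (\<lambda>(i,t). B (rs!i) (sorted_list_of_set (C - {xs!j}) ! t))"
    if j: "j < Suc m" for j
  proof (rule eq_matI)
    fix i j' assume i: "i < dim_row (mat m m (\<lambda>(i,t). B (rs!i) (sorted_list_of_set (C - {xs!j}) ! t)))"
      and j': "j' < dim_col (mat m m (\<lambda>(i,t). B (rs!i) (sorted_list_of_set (C - {xs!j}) ! t)))"
    have "sorted_list_of_set (C - {xs!j}) ! j' = xs ! (if j' < j then j' else Suc j')"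
      using Cons.prems j j' i lx dx by (simp add: sorted_list_of_set_remove xs_def[symmetric] remove1_nth)
    thus "mat_delete M 0 j $$ (i, j') = mat m m (\<lambda>(i,t). B (rs!i) (sorted_list_of_set (C - {xs!j}) ! t)) $$ (i, j')"
      using i j' j by (auto simp: mat_delete_def M_def)
  qed (auto simp: mat_delete_def M_def)
  have "det M = (\<Sum>j<Suc m. M $$ (0,j) * cofactor M 0 j)"
    by (rule laplace_expansion_row[OF MC], simp)
  also have "\<dots> = (\<Sum>j<Suc m. eps (xs!j) C * B r (xs!j) * lapF B rs (C - {xs!j}) {})"
  proof (rule sum.cong[OF refl])
    fix j assume j: "j \<in> {..<Suc m}"
    have xC: "xs!j \<in> C" using j lx setx by auto
    have IH: "lapF B rs (C - {xs!j}) {} = det (mat_delete M 0 j)"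
      using Cons.IH[of "C - {xs!j}"] Cons.prems xC del[of j] j by (simp add: m_def)
    have e: "eps (xs!j) C = ((-1)^j :: 'a)"
      unfolding eps_def using card_less_nth[OF sx, of j, OF _ dx] j lx setx by simp
    show "M $$ (0,j) * cofactor M 0 j = eps (xs!j) C * B r (xs!j) * lapF B rs (C - {xs!j}) {}"
      unfolding IH e cofactor_def using j by (simp add: M_def)
  qed
  also have "\<dots> = (\<Sum>c\<in>C. eps c C * B r c * lapF B rs (C - {c}) {})"
    using sum.reindex_bij_betw[OF bij_betw_nth[OF dx refl refl],
       of "\<lambda>c. eps c C * B r c * lapF B rs (C - {c}) {}"] lx setx
    by simp
  finally show ?case by (simp add: M_def xs_def m_def)
qed

lemma mem_shift: "x \<in> shift A c \<longleftrightarrow> x - c \<in> A"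
  unfolding shift_def by (auto simp: image_iff) (metis diff_add_cancel)
lemma shift_shift[simp]: "shift (shift A c) d = shift A (c+d)"
  unfolding shift_def by (simp add: image_image add.assoc)
lemma shift_0[simp]: "shift A 0 = A"
  unfolding shift_def by simp
lemma shift_diff: "shift (A - B) c = shift A c - shift B c"
  unfolding shift_def by (rule image_set_diff) (simp add: inj_on_def)
lemma shift_Un: "shift (A \<union> B) c = shift A c \<union> shift B c"
  unfolding shift_def by (rule image_Un)
lemma shift_single[simp]: "shift {x} c = {x + c}"
  unfolding shift_def by simp
lemma card_shift[simp]: "card (shift A c) = card A"
  unfolding shift_def by (rule card_image) (simp add: inj_on_def)
lemma finite_shift[simp]: "finite (shift A c) = finite A"
  unfolding shift_def by (rule finite_image_iff) (simp add: inj_on_def)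

lemma finite_subsets_of: "finite (subsets_of n {lo..hi})"
proof -
  have "subsets_of n {lo..hi} \<subseteq> Pow {lo..hi}" unfolding subsets_of_def by auto
  thus ?thesis by (rule finite_subset) simp
qed

lemma mmul_assoc: "mmul X (mmul X f g) h = mmul X f (mmul X g h)"
  unfolding mmul_def
  by (auto simp: fun_eq_iff sum_distrib_left sum_distrib_right mult.assoc intro: sum.swap)

lemma mpow_Suc':
  assumes "finite X"
  shows "I \<in> X \<Longrightarrow> J \<in> X \<Longrightarrow> mpow X f (Suc n) I J = mmul X f (mpow X f n) I J"
proof (induction n arbitrary: I J)
  case 0
  thus ?case using assms by (simp add: mmul_def if_distrib[of "\<lambda>x. x * f _ _"] if_distrib[of "\<lambda>x. f _ _ * x"] cong: if_cong)
next
  case (Suc n)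
  have "mpow X f (Suc (Suc n)) I J = (\<Sum>K\<in>X. mpow X f (Suc n) I K * f K J)"
    by (simp add: mmul_def)
  also have "\<dots> = (\<Sum>K\<in>X. mmul X f (mpow X f n) I K * f K J)"
    using Suc by (intro sum.cong) auto
  also have "\<dots> = mmul X (mmul X f (mpow X f n)) f I J" by (simp add: mmul_def)
  also have "\<dots> = mmul X f (mpow X f (Suc n)) I J" by (simp add: mmul_assoc)
  finally show ?case .
qed

lemma transfer_step:
  fixes bt :: "int \<Rightarrow> 'a::field_char_0" and B :: "int \<Rightarrow> int \<Rightarrow> 'a"
  assumes J: "J \<in> subsets_of n {lo..cc-1}"
  and hi: "d + cc \<le> hi" and loc: "lo \<le> cc"
  and Bval: "\<And>s. s \<le> cc \<Longrightarrow> B r (s+d) = \<sigma> * bt s"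
  and Bzero: "\<And>c. c > d + cc \<Longrightarrow> B r c = 0"
  and sig: "\<sigma>*\<sigma> = 1"
  and dead: "\<forall>r'\<in>set rs. B r' (lo+d) = 0" and deadF: "lo + d \<notin> F"
  and g: "\<And>K. K \<in> subsets_of n {lo..cc-1} \<Longrightarrow> g K = lapF B rs (shift K (d+1) \<union> {d+1+cc..hi}) F"
  shows "(\<Sum>K\<in>subsets_of n {lo..cc-1}. transfer cc bt J K * g K)
         = \<sigma> * lapF B (r#rs) (shift J d \<union> {d+cc..hi}) F"
proof -
  define X where "X = subsets_of n {lo..cc-1}"
  define V where "V = J \<union> {cc}"
  define Ks where "Ks s = shift (V - {s}) (-1)" for s
  have finX: "finite X" unfolding X_def by (rule finite_subsets_of)
  have Jsub: "J \<subseteq> {lo..cc-1}" and cJ: "card J = n" using J unfolding subsets_of_def by auto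
  have finJ: "finite J" using Jsub finite_subset by blast
  have ccJ: "cc \<notin> J" using Jsub by auto
  have finV: "finite V" using finJ by (simp add: V_def)
  have cV: "card V = Suc n" using ccJ finJ cJ by (simp add: V_def)
  have Vsub: "V \<subseteq> {lo..cc}" using Jsub V_def loc by auto
  have shK: "shift (Ks s) 1 = V - {s}" for s by (simp add: Ks_def)
  have injK: "inj_on Ks V"
  proof (rule inj_onI)
    fix s s' assume "s \<in> V" "s' \<in> V" "Ks s = Ks s'"
    hence "V - {s} = V - {s'}" using shK by metis
    thus "s = s'" using \<open>s \<in> V\<close> \<open>s' \<in> V\<close> by blast
  qed
  have trK: "transfer cc bt J (Ks s) = eps s J * bt s" if sV: "s \<in> V" for s
  proof -
    have ex: "J \<union> {cc} = shift (Ks s) 1 \<union> {s}" using sV shK V_def by auto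
    have the: "(THE t. J \<union> {cc} = shift (Ks s) 1 \<union> {t}) = s"
    proof (rule the_equality)
      show "J \<union> {cc} = shift (Ks s) 1 \<union> {s}" by (rule ex)
    next
      fix t assume "J \<union> {cc} = shift (Ks s) 1 \<union> {t}"
      hence "V = (V - {s}) \<union> {t}" using shK V_def by metis
      thus "t = s" using sV by blast
    qed
    show ?thesis unfolding transfer_def using ex the by (auto simp: Let_def)
  qed
  have tr0: "transfer cc bt J K = 0" if "K \<in> X" "K \<notin> Ks ` V" for K
  proof (rule ccontr)
    assume "transfer cc bt J K \<noteq> 0"
    then obtain s where ex: "V = shift K 1 \<union> {s}" unfolding transfer_def V_def by (auto split: if_splits)
    have cK: "card K = n" and finK: "finite K" using that(1) unfolding X_def subsets_of_def
      by (auto intro: finite_subset)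
    have "s \<notin> shift K 1"
    proof
      assume "s \<in> shift K 1"
      hence "V = shift K 1" using ex by blast
      thus False using cV cK by simp
    qed
    hence "shift K 1 = V - {s}" "s \<in> V" using ex by auto
    hence "K = Ks s" "s \<in> V" unfolding Ks_def by (metis add.right_inverse shift_0 shift_shift)+
    thus False using that(2) by blast
  qed
  have LHS: "(\<Sum>K\<in>X. transfer cc bt J K * g K) = (\<Sum>s\<in>{s\<in>V. Ks s \<in> X}. eps s J * bt s * g (Ks s))"
  proof -
    have "(\<Sum>K\<in>X. transfer cc bt J K * g K) = (\<Sum>K\<in>Ks ` {s\<in>V. Ks s \<in> X}. transfer cc bt J K * g K)"
      by (rule sum.mono_neutral_right[OF finX]) (auto intro: tr0)
    also have "\<dots> = (\<Sum>s\<in>{s\<in>V. Ks s \<in> X}. transfer cc bt J (Ks s) * g (Ks s))"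
      by (subst sum.reindex) (auto intro: inj_on_subset[OF injK])
    also have "\<dots> = (\<Sum>s\<in>{s\<in>V. Ks s \<in> X}. eps s J * bt s * g (Ks s))"
      by (rule sum.cong) (auto simp: trK)
    finally show ?thesis .
  qed
  define D where "D = {d+cc+1..hi}"
  define C where "C = shift J d \<union> {d+cc..hi}"
  have CV: "C = shift V d \<union> D" unfolding C_def D_def V_def shift_Un using hi by auto
  have disj: "shift V d \<inter> D = {}" using Vsub unfolding D_def by (auto simp: mem_shift)
  have finC: "finite C" using CV finV by (simp add: D_def)
  have "lapF B (r#rs) C F = (\<Sum>c\<in>shift V d. eps c C * B r c * lapF B rs (C - {c}) F)
          + (\<Sum>c\<in>D. eps c C * B r c * lapF B rs (C - {c}) F)"
    unfolding lapF.simps CV using finV disj by (subst sum.union_disjoint) (auto simp: D_def)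
  also have "(\<Sum>c\<in>D. eps c C * B r c * lapF B rs (C - {c}) F) = 0"
    by (rule sum.neutral) (auto simp: D_def Bzero)
  also have "(\<Sum>c\<in>shift V d. eps c C * B r c * lapF B rs (C - {c}) F)
       = (\<Sum>s\<in>V. eps (s+d) C * B r (s+d) * lapF B rs (C - {s+d}) F)"
    unfolding shift_def by (rule sum.reindex_cong[of "\<lambda>s. s + d"]) (auto simp: inj_on_def)
  also have "\<dots> = (\<Sum>s\<in>V. \<sigma> * (eps s J * bt s * (if Ks s \<in> X then g (Ks s) else 0)))"
  proof (rule sum.cong[OF refl])
    fix s assume sV: "s \<in> V"
    have scc: "s \<le> cc" using sV Vsub by auto
    have "{i \<in> C. i < s + d} = (\<lambda>x. x + d) ` {i \<in> J. i < s}"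
      using scc unfolding C_def shift_def by auto
    hence ep: "eps (s+d) C = (eps s J :: 'a)" unfolding eps_def
      by (simp add: card_image inj_on_def)
    have Cs: "C - {s+d} = shift (Ks s) (d+1) \<union> {d+1+cc..hi}"
    proof -
      have "shift (Ks s) (d+1) = shift (V - {s}) d" unfolding Ks_def by simp
      also have "\<dots> = shift V d - {s+d}" by (simp add: shift_diff)
      finally show ?thesis unfolding CV D_def using disj sV scc by (auto simp: mem_shift)
    qed
    have lv: "lapF B rs (C - {s+d}) F = (if Ks s \<in> X then g (Ks s) else 0)"
    proof (cases "Ks s \<in> X")
      case True thus ?thesis using g Cs X_def by simp
    next
      case False
      have cK: "card (Ks s) = n" unfolding Ks_def using cV sV finV by simp
      hence "\<not> Ks s \<subseteq> {lo..cc-1}" using False unfolding X_def subsets_of_def by auto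
      then obtain x where x: "x \<in> Ks s" "x \<notin> {lo..cc-1}" by (meson subsetI)
      have "x + 1 \<in> V - {s}" using x(1) shK by (metis add.commute mem_shift diff_add_cancel add_diff_cancel_left')
      hence "x + 1 = lo" using Vsub x(2) by auto
      hence "lo \<in> V - {s}" using \<open>x + 1 \<in> V - {s}\<close> by simp
      hence "lo + d \<in> C - {s+d}" unfolding CV shift_def by auto
      thus ?thesis using False lapF_dead[of "lo+d" "C - {s+d}" F rs B] dead deadF by auto
    qed
    show "eps (s+d) C * B r (s+d) * lapF B rs (C - {s+d}) F = \<sigma> * (eps s J * bt s * (if Ks s \<in> X then g (Ks s) else 0))"
      unfolding ep lv Bval[OF scc] by (simp add: ac_simps)
  qed
  also have "\<dots> = \<sigma> * (\<Sum>s\<in>{s\<in>V. Ks s \<in> X}. eps s J * bt s * g (Ks s))"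
    by (simp add: sum_distrib_left[symmetric] sum.inter_filter[OF finV, symmetric] if_distrib[of "\<lambda>x. _ * x"] cong: if_cong)
  finally have "lapF B (r#rs) C F = \<sigma> * (\<Sum>K\<in>X. transfer cc bt J K * g K)" using LHS by simp
  hence "\<sigma> * lapF B (r#rs) C F = (\<Sum>K\<in>X. transfer cc bt J K * g K)" using sig by (simp add: mult.assoc[symmetric])
  thus ?thesis unfolding X_def C_def by simp
qed

lemma shift_interval[simp]: "shift {x..y} c = {x+c..y+c}"
  by (auto simp: mem_shift)
lemma shift_inj: "shift A c = shift B c \<longleftrightarrow> A = B"
  by (metis add.right_inverse shift_0 shift_shift)

lemma Tphase:
  fixes S :: "int set" and w :: "int \<Rightarrow> 'a::field_char_0" and a b :: int and k :: nat
  assumes bz: "\<And>s. s > a \<or> s < -b \<Longrightarrow> beta S w s = 0" and a1: "a \<ge> 1" and b1: "b \<ge> 1"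
  shows "J \<in> subsets_of (nat a) {-b..a-1} \<Longrightarrow> m \<le> k + 1 \<Longrightarrow>
     mpow (subsets_of (nat a) {-b..a-1}) (Tmat S w a) m J {0..a-1}
     = lapF (\<lambda>r c. beta S w (c - r)) [int k + 1 - int m .. int k]
         (shift J (int k + 1 - int m) \<union> {int k + 1 - int m + a .. int k + a}) {int k + 1 .. int k + a}"
proof (induction m arbitrary: J)
  case 0
  have e: "shift J (int k + 1) = {int k + 1 .. int k + a} \<longleftrightarrow> J = {0..a-1}"
  proof -
    have "{int k + 1 .. int k + a} = shift {0..a-1} (int k + 1)" by simp
    thus ?thesis using shift_inj by metis
  qed
  show ?case using e by simp
next
  case (Suc m)
  define X where "X = subsets_of (nat a) {-b..a-1}"
  define d where "d = int k - int m"
  define B where "B = (\<lambda>r c. beta S w (c - r))"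
  define F where "F = {int k + 1 .. int k + a}"
  have I0: "{0..a-1} \<in> X" unfolding X_def subsets_of_def using a1 b1 by auto
  have finX: "finite X" unfolding X_def by (rule finite_subsets_of)
  have "mpow X (Tmat S w a) (Suc m) J {0..a-1} = (\<Sum>K\<in>X. Tmat S w a J K * mpow X (Tmat S w a) m K {0..a-1})"
    using mpow_Suc'[OF finX _ I0] Suc.prems unfolding X_def mmul_def by simp
  also have "\<dots> = (\<Sum>K\<in>X. transfer a (beta S w) J K * lapF B [d+1..int k] (shift K (d+1) \<union> {d+1+a..int k + a}) F)"
  proof (rule sum.cong[OF refl])
    fix K assume "K \<in> X"
    hence "mpow X (Tmat S w a) m K {0..a-1} = lapF B [d+1..int k] (shift K (d+1) \<union> {d+1+a..int k + a}) F"
      using Suc.IH[of K] Suc.prems unfolding X_def B_def F_def d_def by (simp add: algebra_simps)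
    thus "Tmat S w a J K * mpow X (Tmat S w a) m K {0..a-1} = transfer a (beta S w) J K * lapF B [d+1..int k] (shift K (d+1) \<union> {d+1+a..int k + a}) F"
      by (simp add: Tmat_def)
  qed
  also have "\<dots> = 1 * lapF B (d # [d+1..int k]) (shift J d \<union> {d+a..int k + a}) F"
    unfolding X_def
  proof (rule transfer_step[where lo="-b" and cc=a])
    show "J \<in> subsets_of (nat a) {- b..a - 1}" by (rule Suc.prems)
    show "d + a \<le> int k + a" unfolding d_def by simp
    show "-b \<le> a" using a1 b1 by simp
    show "B d (s + d) = 1 * beta S w s" for s unfolding B_def by simp
    show "B d c = 0" if "d + a < c" for c unfolding B_def using bz[of "c - d"] that by simp
    show "(1::'a) * 1 = 1" by simp
    show "\<forall>r'\<in>set [d + 1..int k]. B r' (- b + d) = 0" unfolding B_def using bz by auto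
    show "- b + d \<notin> F" unfolding F_def d_def using b1 by auto
  qed (rule refl)
  also have "d # [d+1..int k] = [d..int k]" using upto_rec1[of d "int k"] Suc.prems unfolding d_def by simp
  finally show ?case unfolding X_def B_def F_def d_def by (simp add: algebra_simps)
qed

lemma mmul_assoc2: "mmul X (mmul Y f g) h = mmul Y f (mmul X g h)"
  unfolding mmul_def
  by (auto simp: fun_eq_iff sum_distrib_left sum_distrib_right mult.assoc intro: sum.swap)

lemma Ttphase:
  fixes S :: "int set" and w :: "int \<Rightarrow> 'a::field_char_0" and a b :: int and k l :: nat
  assumes bz: "\<And>s. s > a \<or> s < -b \<Longrightarrow> beta S w s = 0" and a1: "a \<ge> 1" and b1: "b \<ge> 1"
    and lk: "l \<le> k"
  shows "L \<in> subsets_of (nat (a-1)) {-b-1..a-2} \<Longrightarrow> q \<le> l \<Longrightarrow>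
     mmul (subsets_of (nat (a-1)) {-b-1..a-2}) (mpow (subsets_of (nat (a-1)) {-b-1..a-2}) (Ttmat S w a) q)
        (mmul (subsets_of (nat a) {-b..a-1}) (Umat a) (mpow (subsets_of (nat a) {-b..a-1}) (Tmat S w a) (k-l)))
        L {0..a-1}
     = (-1)^q * lapF (\<lambda>r c. beta S w (c - r)) ([int l - int q .. int l - 1] @ [int l + 1 .. int k])
         (shift L (int l - int q + 1) \<union> {int l - int q + a .. int k + a}) {int k + 1 .. int k + a}"
proof (induction q arbitrary: L)
  case 0
  define X where "X = subsets_of (nat a) {-b..a-1}"
  define Y where "Y = subsets_of (nat (a-1)) {-b-1..a-2}"
  define B where "B = (\<lambda>r c. beta S w (c - r))"
  define F where "F = {int k + 1 .. int k + a}"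
  define H where "H = mmul X (Umat a) (mpow X (Tmat S w a) (k-l))"
  have finY: "finite Y" unfolding Y_def by (rule finite_subsets_of)
  have finX: "finite X" unfolding X_def by (rule finite_subsets_of)
  have LY: "L \<in> Y" using 0 Y_def by simp
  have "mmul Y (mpow Y (Ttmat S w a) 0) H L {0..a-1} = H L {0..a-1}"
    using LY finY by (simp add: mmul_def if_distrib[of "\<lambda>x. x * _"] cong: if_cong)
  also have "\<dots> = (if L \<union> {a-1} \<in> X then mpow X (Tmat S w a) (k-l) (L \<union> {a-1}) {0..a-1} else 0)"
    unfolding H_def mmul_def Umat_def using finX
    by (simp add: if_distrib[of "\<lambda>x. x * _"] cong: if_cong)
  also have "\<dots> = lapF B [int l + 1 .. int k] (shift L (int l + 1) \<union> {int l + a .. int k + a}) F"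
  proof (cases "L \<union> {a-1} \<in> X")
    case True
    have e: "shift (L \<union> {a-1}) (int l + 1) \<union> {int l + 1 + a .. int k + a} = shift L (int l + 1) \<union> {int l + a .. int k + a}"
      unfolding shift_Un shift_single using lk by auto
    have T: "mpow X (Tmat S w a) (k-l) (L \<union> {a-1}) {0..a-1} = lapF B [int l + 1 .. int k] (shift (L \<union> {a-1}) (int l + 1) \<union> {int l + 1 + a .. int k + a}) F"
      using Tphase[OF bz a1 b1, of "L \<union> {a-1}" "k - l" k] True lk
      unfolding X_def B_def F_def by (simp add: of_nat_diff algebra_simps)
    show ?thesis using True unfolding T e by simp
  next
    case False
    have Lsub: "L \<subseteq> {-b-1..a-2}" and cL: "card L = nat (a-1)" using LY unfolding Y_def subsets_of_def by auto
    have finL: "finite L" using Lsub finite_subset by blast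
    have "a - 1 \<notin> L" using Lsub by auto
    hence "card (L \<union> {a-1}) = nat a" using cL finL a1 by simp
    hence "\<not> L \<union> {a-1} \<subseteq> {-b..a-1}" using False unfolding X_def subsets_of_def by auto
    then obtain x where x: "x \<in> L \<union> {a-1}" "x \<notin> {-b..a-1}" by (meson subsetI)
    have "x \<in> L" using x a1 b1 by auto
    hence "x = -b-1" using x Lsub by auto
    hence "-b-1 \<in> L" using \<open>x \<in> L\<close> by simp
    hence "-b-1 + (int l + 1) \<in> shift L (int l + 1) \<union> {int l + a .. int k + a}" by (auto simp: mem_shift)
    hence "lapF B [int l + 1 .. int k] (shift L (int l + 1) \<union> {int l + a .. int k + a}) F = 0"
      by (rule lapF_dead) (use lk b1 in \<open>auto simp: F_def B_def intro!: bz\<close>)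
    thus ?thesis using False by simp
  qed
  finally show ?case unfolding X_def Y_def B_def F_def H_def by simp
next
  case (Suc q)
  define X where "X = subsets_of (nat a) {-b..a-1}"
  define Y where "Y = subsets_of (nat (a-1)) {-b-1..a-2}"
  define B where "B = (\<lambda>r c. beta S w (c - r))"
  define F where "F = {int k + 1 .. int k + a}"
  define H where "H = mmul X (Umat a) (mpow X (Tmat S w a) (k-l))"
  define r where "r = int l - int q - 1"
  define rs where "rs = [int l - int q .. int l - 1] @ [int l + 1 .. int k]"
  have finY: "finite Y" unfolding Y_def by (rule finite_subsets_of)
  have LY: "L \<in> Y" using Suc Y_def by simp
  have e2: "{-b-1..a-2} = {-b-1..a-1-1}" by simp
  have "mmul Y (mpow Y (Ttmat S w a) (Suc q)) H L {0..a-1} = (\<Sum>K\<in>Y. mmul Y (Ttmat S w a) (mpow Y (Ttmat S w a) q) L K * H K {0..a-1})"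
    unfolding mmul_def[of Y "mpow Y (Ttmat S w a) (Suc q)"]
    by (rule sum.cong[OF refl], subst mpow_Suc'[OF finY LY], auto)
  also have "\<dots> = mmul Y (Ttmat S w a) (mmul Y (mpow Y (Ttmat S w a) q) H) L {0..a-1}"
    by (simp add: mmul_def[of Y "mmul Y _ _"] mmul_assoc[symmetric])
  also have "\<dots> = (\<Sum>K\<in>Y. transfer (a-1) (betat S w) L K * ((-1)^q * lapF B rs (shift K (r+1+1) \<union> {r+1+1+(a-1)..int k + a}) F))"
    unfolding mmul_def[of Y "Ttmat S w a"]
  proof (rule sum.cong[OF refl])
    fix K assume K: "K \<in> Y"
    show "Ttmat S w a L K * mmul Y (mpow Y (Ttmat S w a) q) H K {0..a-1} = transfer (a-1) (betat S w) L K * ((-1)^q * lapF B rs (shift K (r+1+1) \<union> {r+1+1+(a-1)..int k + a}) F)"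
      using Suc.IH[of K] K Suc.prems unfolding Ttmat_def Y_def H_def X_def B_def F_def rs_def r_def
      by (simp add: algebra_simps)
  qed
  also have "\<dots> = (-1)^q * (\<Sum>K\<in>Y. transfer (a-1) (betat S w) L K * lapF B rs (shift K (r+1+1) \<union> {r+1+1+(a-1)..int k + a}) F)"
    by (simp add: sum_distrib_left ac_simps)
  also have "(\<Sum>K\<in>Y. transfer (a-1) (betat S w) L K * lapF B rs (shift K (r+1+1) \<union> {r+1+1+(a-1)..int k + a}) F)
     = (-1) * lapF B (r # rs) (shift L (r+1) \<union> {r+1+(a-1)..int k + a}) F"
    unfolding Y_def e2
  proof (rule transfer_step[where lo="-b-1" and cc="a-1"])
    show "L \<in> subsets_of (nat (a-1)) {-b-1..a-1-1}" using LY Y_def by simp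
    show "r + 1 + (a-1) \<le> int k + a" unfolding r_def using Suc.prems lk by simp
    show "-b-1 \<le> a-1" using a1 b1 by simp
    show "B r (s + (r+1)) = -1 * betat S w s" for s unfolding B_def betat_def by (simp add: algebra_simps)
    show "B r c = 0" if "r + 1 + (a-1) < c" for c unfolding B_def using bz[of "c - r"] that by simp
    show "(-1::'a) * -1 = 1" by simp
    show "\<forall>r'\<in>set rs. B r' (-b-1 + (r+1)) = 0" unfolding B_def rs_def r_def using bz lk by auto
    show "-b-1 + (r+1) \<notin> F" unfolding F_def r_def using b1 Suc.prems lk by auto
  qed simp
  also have "r # rs = [int l - int (Suc q) .. int l - 1] @ [int l + 1 .. int k]"
  proof -
    have e: "int l - int (Suc q) = r" unfolding r_def by simp
    have r1: "r + 1 = int l - int q" unfolding r_def by simp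
    have rl: "r \<le> int l - 1" unfolding r_def by simp
    have "[r .. int l - 1] = r # [int l - int q .. int l - 1]" using upto_rec1[OF rl] unfolding r1 .
    thus ?thesis unfolding e rs_def by simp
  qed
  finally show ?case unfolding X_def Y_def B_def F_def H_def r_def by (simp add: algebra_simps)
qed

theorem mainTheorem8:
  fixes S :: "int set" and w :: "int \<Rightarrow> 'a::field_char_0" and a b :: int and k l :: nat
  assumes "finite S" and "S \<noteq> {}"
    and "a = Max S" and "b = - Min S" and "a \<ge> 1" and "b \<ge> 1"
    and "l \<le> k"
  shows "Fkl S w k l =
           mmul (subsets_of (nat a) {-b..a-1})
             (mmul (subsets_of (nat (a-1)) {-b-1..a-2})
                (mpow (subsets_of (nat (a-1)) {-b-1..a-2}) (Ttmat S w a) l)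
                (Umat a))
             (mpow (subsets_of (nat a) {-b..a-1}) (Tmat S w a) (k - l))
             {0..a-2} {0..a-1}
         \<and> Fkl S w k 0 = Fk S w k"
proof
  note fS = assms(1) and neS = assms(2) and aM = assms(3) and bM = assms(4)
    and a1 = assms(5) and b1 = assms(6) and lk = assms(7)
  have bz: "beta S w s = 0" if "s > a \<or> s < -b" for s
  proof -
    have "s \<notin> S" using that Max_ge[OF fS] Min_le[OF fS] aM bM by force
    moreover have "s \<noteq> 0" using that a1 b1 by auto
    ultimately show ?thesis by (simp add: beta_def wt_def)
  qed
  define X where "X = subsets_of (nat a) {-b..a-1}"
  define Y where "Y = subsets_of (nat (a-1)) {-b-1..a-2}"
  define B where "B = (\<lambda>r c. beta S w (c - r))"
  define F where "F = {int k + 1 .. int k + a}"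
  define rows where "rows = [0 .. int l - 1] @ [int l + 1 .. int k]"
  have Y0: "{0..a-2} \<in> Y" unfolding Y_def subsets_of_def using a1 b1 by auto
  have "mmul X (mmul Y (mpow Y (Ttmat S w a) l) (Umat a)) (mpow X (Tmat S w a) (k - l)) {0..a-2} {0..a-1}
     = mmul Y (mpow Y (Ttmat S w a) l) (mmul X (Umat a) (mpow X (Tmat S w a) (k - l))) {0..a-2} {0..a-1}"
    by (simp add: mmul_assoc2)
  also have "\<dots> = (-1)^l * lapF B rows (shift {0..a-2} 1 \<union> {a .. int k + a}) F"
    using Ttphase[OF bz a1 b1 lk, of "{0..a-2}" l] Y0 unfolding X_def Y_def B_def F_def rows_def
    by simp
  also have "shift {0..a-2} 1 \<union> {a .. int k + a} = {1 .. int k + a}" using a1 by auto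
  also have "lapF B rows {1 .. int k + a} F = lapF B rows {1 .. int k} {}"
  proof -
    have e: "{1 .. int k + a} - F = {1 .. int k}" unfolding F_def using a1 by auto
    show ?thesis using lapF_strip[of "{1 .. int k + a}" F B rows] a1 unfolding e by (auto simp: F_def)
  qed
  also have "\<dots> = det (mat k k (\<lambda>(i,j). B (rows!i) (sorted_list_of_set {1 .. int k} ! j)))"
  proof -
    have lr: "length rows = k" unfolding rows_def using lk by simp
    show ?thesis using lap_det[of "{1 .. int k}" rows B] lr by simp
  qed
  also have "mat k k (\<lambda>(i,j). B (rows!i) (sorted_list_of_set {1 .. int k} ! j)) = mat_delete (1\<^sub>m (k+1) - Amat S w k) l 0"
  proof (rule eq_matI)
    fix i j assume i: "i < dim_row (mat_delete (1\<^sub>m (k+1) - Amat S w k) l 0)"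
      and j: "j < dim_col (mat_delete (1\<^sub>m (k+1) - Amat S w k) l 0)"
    have ik: "i < k" and jk: "j < k" using i j by (auto simp: Amat_def)
    have ri: "rows ! i = int (if i < l then i else Suc i)"
      unfolding rows_def using ik lk by (auto simp: nth_append nth_upto)
    have sj: "sorted_list_of_set {1 .. int k} ! j = int (Suc j)"
      using jk by (simp add: sorted_lift_of_set_eq_upto nth_upto)
    show "mat k k (\<lambda>(i,j). B (rows!i) (sorted_list_of_set {1 .. int k} ! j)) $$ (i, j) = mat_delete (1\<^sub>m (k+1) - Amat S w k) l 0 $$ (i, j)"
    proof -
      define ri' where "ri' = (if i < l then i else Suc i)"
      have ri'k: "ri' < k + 1" using ik unfolding ri'_def by auto
      have L: "mat k k (\<lambda>(i,j). B (rows!i) (sorted_list_of_set {1 .. int k} ! j)) $$ (i, j) = beta S w (int (Suc j) - int ri')"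
        using ik jk by (simp add: B_def ri sj ri'_def)
      have R: "mat_delete (1\<^sub>m (k+1) - Amat S w k) l 0 $$ (i, j) = (1\<^sub>m (k+1) - Amat S w k) $$ (ri', Suc j)"
        using ik jk unfolding mat_delete_def ri'_def by (simp add: Amat_def)
      have R2: "(1\<^sub>m (k+1) - Amat S w k) $$ (ri', Suc j) = (if ri' = Suc j then 1 else 0) - wt S w (int (Suc j) - int ri')"
        using ri'k jk by (simp add: Amat_def)
      show ?thesis unfolding L R R2 beta_def by auto
    qed
  qed (auto simp: Amat_def)
  finally show "Fkl S w k l = mmul X (mmul Y (mpow Y (Ttmat S w a) l) (Umat a)) (mpow X (Tmat S w a) (k - l)) {0..a-2} {0..a-1}"
    unfolding Fkl_def cofactor_def by simp
next
  show "Fkl S w k 0 = Fk S w k"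
  proof (cases k)
    case 0
    thus ?thesis unfolding Fkl_def Fk_def cofactor_def
      by (simp add: det_dim_zero mat_delete_def Amat_def)
  next
    case (Suc k')
    have "mat_delete (1\<^sub>m (k+1) - Amat S w k) 0 0 = 1\<^sub>m k - Amat S w (k-1)"
      by (rule eq_matI) (auto simp: mat_delete_def Amat_def Suc)
    thus ?thesis unfolding Fkl_def Fk_def cofactor_def using Suc by simp
  qed
qed

end
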